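(* Let $\mathcal{W}=(A,\to,\mathbb{S},\mathsf{f}_{\mathtt{NF}},\mathsf{Aggr})$ be a wARS, let $a\in A$, and let $\mathfrak{T}$ be an $(A,\to)$-reduction tree of finite depth whose root $r$ and some leaf $v_0\neq r$ are both labeled with $a$. Let $t\in S$ satisfy $\bigoplus_{i=1}^{\infty}t=\top$. If $\mathcal{P}_{v_0}(\mathfrak{T})(s)\succcurlyeq s\oplus t$ for all $s\in S$, then $[\![a]\!]=\top$.
   Context: A semiring $\mathbb{S}=(S,\oplus,\odot,\mathbf{0},\mathbf{1})$: $(S,\oplus,\mathbf{0})$ commutative monoid, $(S,\odot,\mathbf{1})$ monoid, $\odot$ distributes over $\oplus$, $\mathbf{0}$ annihilator. Natural order: $s\preccurlyeq t$ iff $s\oplus u=t$ for some $u$. A complete lattice semiring is one where $\preccurlyeq$ is antisymmetric and every subset $T\subseteq S$ has a least upper bound $\bigsqcup T$; $\top=\bigsqcup S$. For an infinite sequence, $\bigoplus_{i=1}^\infty s_i=\bigsqcup\{s_1\oplus\cdots\oplus s_n\mid n\ge1\}$, and similarly for infinite products. $\mathrm{Seq}(X)$: non-empty finite or infinite sequences over $X$. An sARS is $(A,\to)$ with $\to\subseteq A\times\mathrm{Seq}(A)$; $\mathtt{NF}_\to$ is the set of $a$ with no $B$ such that $a\to B$. An $(A,\to)$-reduction tree (RT) is a labeled ordered tree whose nodes $v$ carry labels $a_v\in A$ and whose ordered child sequence $vE$ is either empty or satisfies $a_v\to[a_w\mid w\in vE]$. Aggregators: smallest set containing constants $s\in S$,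 variables $v_1,v_2,\dots$, and $\bigoplus F$, $\bigodot F$ for non-empty finite or infinite sequences $F$ of aggregators; they induce functions by substituting the $i$-th argument for $v_i$. A wARS $(A,\to,\mathbb{S},\mathsf{f}_{\mathtt{NF}},\mathsf{Aggr})$ consists of an sARS, a complete lattice semiring $\mathbb{S}$, a map $\mathsf{f}_{\mathtt{NF}}:\mathtt{NF}_\to\to S$, and for each $a\to B$ an aggregator $\mathsf{Aggr}_{a\to B}$ with variable indices $\le|B|$, viewed as a function $S^{|B|}\to S$. Weight of a finite-depth RT $\mathfrak{T}$ at node $v$: $\mathsf{f}_{\mathtt{NF}}(a_v)$ if $a_v\in\mathtt{NF}_\to$; $\mathbf{0}$ if $v$ is a leaf with $a_v\notin\mathtt{NF}_\to$; $\mathsf{Aggr}_{a_v\to B}[$weights of the children in order$]$ with $B=[a_w\mid w\in vE]$ otherwise; $[\![\mathfrak{T}]\!]$ is the weight at the root. $[\![a]\!]=\bigsqcup\{[\![\mathfrak{T}]\!]\mid\mathfrak{T}$ a finite-depth RT with root labeled $a\}$. Induced weight polynomial: for a finite-depth RT $\mathfrak{T}$ with a leaf $v_0$ and a variable $X$, define $[\![\mathfrak{T}]\!]^{v_0}_{v_0}=X$; for $v\neq v_0$ with $a_v\in\mathtt{NF}_\to$, $[\![\mathfrak{T}]\!]^{v_0}_v=\mathsf{f}_{\mathtt{NF}}(a_v)$; for a leaf $v\neq v_0$ with $a_v\notin\mathtt{NF}_\to$, $[\![\mathfrak{T}]\!]^{v_0}_v=\mathbf{0}$; for an inner node $v$,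 $[\![\mathfrak{T}]\!]^{v_0}_v=\mathsf{Aggr}_{a_v\to B}[[\![\mathfrak{T}]\!]^{v_0}_w\mid w\in vE]$ with $B=[a_w\mid w\in vE]$. Then $\mathcal{P}_{v_0}(\mathfrak{T})=[\![\mathfrak{T}]\!]^{v_0}_r$ (with $r$ the root) is an expression in $X$, and $\mathcal{P}_{v_0}(\mathfrak{T})(s)$ denotes its value when $X$ is replaced by $s\in S$. *)

theory Defs
  imports Main "HOL-Library.Extended_Nat"
begin

record 's sr_ops =
  sadd :: "'s \<Rightarrow> 's \<Rightarrow> 's"
  smul :: "'s \<Rightarrow> 's \<Rightarrow> 's"
  szero :: 's
  sone :: 's

definition is_semiring :: "'s sr_ops \<Rightarrow> bool" where
  "is_semiring R \<longleftrightarrow>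
     (\<forall>x y z. sadd R (sadd R x y) z = sadd R x (sadd R y z)) \<and>
     (\<forall>x y. sadd R x y = sadd R y x) \<and>
     (\<forall>x. sadd R (szero R) x = x) \<and>
     (\<forall>x y z. smul R (smul R x y) z = smul R x (smul R y z)) \<and>
     (\<forall>x. smul R (sone R) x = x \<and> smul R x (sone R) = x) \<and>
     (\<forall>x y z. smul R x (sadd R y z) = sadd R (smul R x y) (smul R x z)) \<and>
     (\<forall>x y z. smul R (sadd R x y) z = sadd R (smul R x z) (smul R y z)) \<and>
     (\<forall>x. smul R (szero R) x = szero R \<and> smul R x (szero R) = szero R)"

definition nle :: "'s sr_ops \<Rightarrow> 's \<Rightarrow> 's \<Rightarrow> bool" where
  "nle R s t \<longleftrightarrow> (\<exists>u. sadd R s u = t)"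

definition is_lub :: "'s sr_ops \<Rightarrow> 's set \<Rightarrow> 's \<Rightarrow> bool" where
  "is_lub R T x \<longleftrightarrow> (\<forall>y\<in>T. nle R y x) \<and> (\<forall>z. (\<forall>y\<in>T. nle R y z) \<longrightarrow> nle R x z)"

definition Lub :: "'s sr_ops \<Rightarrow> 's set \<Rightarrow> 's" where
  "Lub R T = (THE x. is_lub R T x)"

definition Top :: "'s sr_ops \<Rightarrow> 's" where
  "Top R = Lub R UNIV"

definition complete_lattice_semiring :: "'s sr_ops \<Rightarrow> bool" where
  "complete_lattice_semiring R \<longleftrightarrow> is_semiring R \<and>
     (\<forall>s t. nle R s t \<longrightarrow> nle R t s \<longrightarrow> s = t) \<and>
     (\<forall>T. \<exists>x. is_lub R T x)"

datatype 'x seq = FinSeq "'x list" | InfSeq "nat \<Rightarrow> 'x"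

fun seq_ok :: "'x seq \<Rightarrow> bool" where
  "seq_ok (FinSeq xs) = (xs \<noteq> [])"
| "seq_ok (InfSeq f) = True"

fun seq_len :: "'x seq \<Rightarrow> enat" where
  "seq_len (FinSeq xs) = enat (length xs)"
| "seq_len (InfSeq f) = \<infinity>"

text \<open>0-based access\<close>
fun seq_nth :: "'x seq \<Rightarrow> nat \<Rightarrow> 'x" where
  "seq_nth (FinSeq xs) i = xs ! i"
| "seq_nth (InfSeq f) i = f i"

fun ssum :: "'s sr_ops \<Rightarrow> 's seq \<Rightarrow> 's" where
  "ssum R (FinSeq xs) = foldr (sadd R) xs (szero R)"
| "ssum R (InfSeq f) = Lub R {foldr (sadd R) (map f [0..<n]) (szero R) | n. n \<ge> 1}"

fun sprod :: "'s sr_ops \<Rightarrow> 's seq \<Rightarrow> 's" where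
  "sprod R (FinSeq xs) = foldr (smul R) xs (sone R)"
| "sprod R (InfSeq f) = Lub R {foldr (smul R) (map f [0..<n]) (sone R) | n. n \<ge> 1}"

definition inf_sum_const :: "'s sr_ops \<Rightarrow> 's \<Rightarrow> 's" where
  "inf_sum_const R t = ssum R (InfSeq (\<lambda>_. t))"

text \<open>\<open>AVar i\<close> stands for the variable v_i (1-based).\<close>
datatype 's aggr = AConst 's | AVar nat | ASum "'s aggr seq" | AProd "'s aggr seq"

inductive aggr_wf :: "enat \<Rightarrow> 's aggr \<Rightarrow> bool" for n where
  "aggr_wf n (AConst s)"
| "1 \<le> i \<Longrightarrow> enat i \<le> n \<Longrightarrow> aggr_wf n (AVar i)"
| "seq_ok F \<Longrightarrow> \<forall>g\<in>set_seq F. aggr_wf n g \<Longrightarrow> aggr_wf n (ASum F)"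
| "seq_ok F \<Longrightarrow> \<forall>g\<in>set_seq F. aggr_wf n g \<Longrightarrow> aggr_wf n (AProd F)"

primrec aeval :: "'s sr_ops \<Rightarrow> 's aggr \<Rightarrow> (nat \<Rightarrow> 's) \<Rightarrow> 's" where
  "aeval R (AConst s) = (\<lambda>\<sigma>. s)"
| "aeval R (AVar i) = (\<lambda>\<sigma>. \<sigma> i)"
| "aeval R (ASum F) = (\<lambda>\<sigma>. ssum R (map_seq (\<lambda>h. h \<sigma>) (map_seq (aeval R) F)))"
| "aeval R (AProd F) = (\<lambda>\<sigma>. sprod R (map_seq (\<lambda>h. h \<sigma>) (map_seq (aeval R) F)))"

definition NF :: "('a \<Rightarrow> 'a seq \<Rightarrow> bool) \<Rightarrow> 'a set" where
  "NF step = {a. \<not> (\<exists>B. step a B)}"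

definition is_wARS ::
  "('a \<Rightarrow> 'a seq \<Rightarrow> bool) \<Rightarrow> 's sr_ops \<Rightarrow> ('a \<Rightarrow> 's) \<Rightarrow> ('a \<Rightarrow> 'a seq \<Rightarrow> 's aggr) \<Rightarrow> bool" where
  "is_wARS step R fNF Aggr \<longleftrightarrow>
     (\<forall>a B. step a B \<longrightarrow> seq_ok B) \<and>
     complete_lattice_semiring R \<and>
     (\<forall>a B. step a B \<longrightarrow> aggr_wf (seq_len B) (Aggr a B))"

text \<open>Labeled ordered trees; a leaf has the empty child sequence, an inner node a non-empty one.
  Nodes are addressed by paths (lists of 0-based child indices), the root by [].\<close>
datatype 'a tree = Leaf 'a | Inner 'a "'a tree seq"

fun label :: "'a tree \<Rightarrow> 'a" where
  "label (Leaf a) = a"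
| "label (Inner a F) = a"

inductive is_rt :: "('a \<Rightarrow> 'a seq \<Rightarrow> bool) \<Rightarrow> 'a tree \<Rightarrow> bool" for step where
  "is_rt step (Leaf a)"
| "seq_ok F \<Longrightarrow> step a (map_seq label F) \<Longrightarrow> \<forall>c\<in>set_seq F. is_rt step c \<Longrightarrow> is_rt step (Inner a F)"

inductive depth_le :: "nat \<Rightarrow> 'a tree \<Rightarrow> bool" where
  "depth_le n (Leaf a)"
| "\<forall>c\<in>set_seq F. depth_le n c \<Longrightarrow> depth_le (Suc n) (Inner a F)"

definition finite_depth :: "'a tree \<Rightarrow> bool" where
  "finite_depth T \<longleftrightarrow> (\<exists>n. depth_le n T)"

primrec subtree_at :: "'a tree \<Rightarrow> nat list \<Rightarrow> 'a tree option" where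
  "subtree_at (Leaf a) = (\<lambda>p. if p = [] then Some (Leaf a) else None)"
| "subtree_at (Inner a F) = (\<lambda>p. case p of [] \<Rightarrow> Some (Inner a F)
      | i # q \<Rightarrow> if enat i < seq_len F then seq_nth (map_seq subtree_at F) i q else None)"

primrec wt_gen :: "'s sr_ops \<Rightarrow> ('a \<Rightarrow> 'a seq \<Rightarrow> 's aggr) \<Rightarrow> 'a tree \<Rightarrow> (nat list \<Rightarrow> 'a \<Rightarrow> 's) \<Rightarrow> 's" where
  "wt_gen R Aggr (Leaf a) = (\<lambda>lv. lv [] a)"
| "wt_gen R Aggr (Inner a F) = (\<lambda>lv. aeval R (Aggr a (map_seq label F))
      (\<lambda>i. seq_nth (map_seq (wt_gen R Aggr) F) (i - 1) (\<lambda>p. lv ((i - 1) # p))))"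

definition leaf_val :: "('a \<Rightarrow> 'a seq \<Rightarrow> bool) \<Rightarrow> 's sr_ops \<Rightarrow> ('a \<Rightarrow> 's) \<Rightarrow> 'a \<Rightarrow> 's" where
  "leaf_val step R fNF a = (if a \<in> NF step then fNF a else szero R)"

definition weight ::
  "('a \<Rightarrow> 'a seq \<Rightarrow> bool) \<Rightarrow> 's sr_ops \<Rightarrow> ('a \<Rightarrow> 's) \<Rightarrow> ('a \<Rightarrow> 'a seq \<Rightarrow> 's aggr) \<Rightarrow> 'a tree \<Rightarrow> 's" where
  "weight step R fNF Aggr T = wt_gen R Aggr T (\<lambda>p a. leaf_val step R fNF a)"

definition weight_poly ::
  "('a \<Rightarrow> 'a seq \<Rightarrow> bool) \<Rightarrow> 's sr_ops \<Rightarrow> ('a \<Rightarrow> 's) \<Rightarrow> ('a \<Rightarrow> 'a seq \<Rightarrow> 's aggr) \<Rightarrow> 'a tree \<Rightarrow> nat list \<Rightarrow> 's \<Rightarrow> 's" where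
  "weight_poly step R fNF Aggr T v0 s =
     wt_gen R Aggr T (\<lambda>p a. if p = v0 then s else leaf_val step R fNF a)"

definition sem ::
  "('a \<Rightarrow> 'a seq \<Rightarrow> bool) \<Rightarrow> 's sr_ops \<Rightarrow> ('a \<Rightarrow> 's) \<Rightarrow> ('a \<Rightarrow> 'a seq \<Rightarrow> 's aggr) \<Rightarrow> 'a \<Rightarrow> 's" where
  "sem step R fNF Aggr a = Lub R {weight step R fNF Aggr T | T. is_rt step T \<and> finite_depth T \<and> label T = a}"

end

theory Submission
  imports Defs
begin

fun seq_mapi :: "(nat \<Rightarrow> 'x \<Rightarrow> 'y) \<Rightarrow> 'x seq \<Rightarrow> 'y seq" where
  "seq_mapi f (FinSeq xs) = FinSeq (map (\<lambda>(i, x). f i x) (zip [0..<length xs] xs))"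
| "seq_mapi f (InfSeq h) = InfSeq (\<lambda>i. f i (h i))"

lemma seq_len_mapi[simp]: "seq_len (seq_mapi f S) = seq_len S"
  by (cases S) auto

lemma seq_ok_mapi[simp]: "seq_ok (seq_mapi f S) = seq_ok S"
  by (cases S) auto

lemma seq_len_map[simp]: "seq_len (map_seq f S) = seq_len S"
  by (cases S) auto

lemma seq_ok_map[simp]: "seq_ok (map_seq f S) = seq_ok S"
  by (cases S) auto

lemma seq_nth_mapi: "enat i < seq_len S \<Longrightarrow> seq_nth (seq_mapi f S) i = f i (seq_nth S i)"
  by (cases S) auto

lemma seq_nth_map: "enat i < seq_len S \<Longrightarrow> seq_nth (map_seq f S) i = f (seq_nth S i)"
  by (cases S) auto

lemma set_seq_conv: "set_seq S = {seq_nth S i | i. enat i < seq_len S}"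
  by (cases S) (auto simp: in_set_conv_nth)

lemma nth_beyond: "length xs \<le> j \<Longrightarrow> xs ! j = [] ! (j - length xs)"
proof (induction xs arbitrary: j)
  case Nil then show ?case by simp
next
  case (Cons x xs)
  then obtain k where "j = Suc k" by (cases j) auto
  with Cons show ?case by simp
qed

lemma map_label_mapi:
  assumes "\<And>i. enat i < seq_len S \<Longrightarrow> label (f i (seq_nth S i)) = label (seq_nth S i)"
  shows "map_seq label (seq_mapi f S) = map_seq label S"
proof (cases S)
  case (FinSeq xs)
  then show ?thesis using assms by (auto intro!: nth_equalityI)
next
  case (InfSeq h)
  then show ?thesis using assms by auto
qed

primrec rp :: "'a tree \<Rightarrow> (nat list \<Rightarrow> 'a tree option) \<Rightarrow> 'a tree" where
  "rp (Leaf b) = (\<lambda>g. case g [] of None \<Rightarrow> Leaf b | Some T' \<Rightarrow> T')"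
| "rp (Inner b F) = (\<lambda>g. Inner b (seq_mapi (\<lambda>i h. h (\<lambda>p. g (i # p))) (map_seq rp F)))"

lemma rp_child:
  "enat i < seq_len F \<Longrightarrow> seq_nth (seq_mapi (\<lambda>i h. h (\<lambda>p. g (i # p))) (map_seq rp F)) i
     = rp (seq_nth F i) (\<lambda>p. g (i # p))"
  by (simp add: seq_nth_mapi seq_nth_map)

definition G :: "'a tree \<Rightarrow> (nat list \<Rightarrow> 'a tree option) \<Rightarrow> bool" where
  "G T g \<longleftrightarrow> (\<forall>p T'. g p = Some T' \<longrightarrow> (\<exists>b. subtree_at T p = Some (Leaf b) \<and> label T' = b))"

lemma subtree_nil[simp]: "subtree_at T [] = Some T"
  by (cases T) auto

lemma G_child:
  assumes "G (Inner b F) g" "enat i < seq_len F"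
  shows "G (seq_nth F i) (\<lambda>p. g (i # p))"
  unfolding G_def
proof (intro allI impI)
  fix p T' assume "g (i # p) = Some T'"
  with assms(1) obtain c where "subtree_at (Inner b F) (i # p) = Some (Leaf c)" "label T' = c"
    unfolding G_def by blast
  then show "\<exists>c. subtree_at (seq_nth F i) p = Some (Leaf c) \<and> label T' = c"
    using assms(2) by (auto simp: seq_nth_map)
qed

lemma G_out:
  assumes "G (Inner b F) g" "\<not> enat i < seq_len F"
  shows "g (i # p) = None"
proof (rule ccontr)
  assume "g (i # p) \<noteq> None"
  then obtain T' where "g (i # p) = Some T'" by auto
  with assms(1) obtain c where "subtree_at (Inner b F) (i # p) = Some (Leaf c)"
    unfolding G_def by blast
  with assms(2) show False by simp
qed

lemma G_nil: "G T g \<Longrightarrow> g [] = Some T' \<Longrightarrow> T = Leaf (label T')"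
  unfolding G_def by fastforce

lemma label_rp:
  assumes "G T g" shows "label (rp T g) = label T"
proof (cases T)
  case (Leaf b)
  then show ?thesis using G_nil[OF assms] by (cases "g []") auto
next
  case (Inner b F)
  then show ?thesis by simp
qed

lemma map_label_rp:
  assumes "G (Inner b F) g"
  shows "map_seq label (seq_mapi (\<lambda>i h. h (\<lambda>p. g (i # p))) (map_seq rp F)) = map_seq label F"
proof (cases F)
  case (FinSeq xs)
  have "\<And>i. i < length xs \<Longrightarrow> label (rp (xs ! i) (\<lambda>p. g (i # p))) = label (xs ! i)"
    using label_rp G_child[OF assms] FinSeq by (simp add: label_rp)
  then show ?thesis unfolding FinSeq by (auto intro!: nth_equalityI)
next
  case (InfSeq h)
  have "\<And>i. label (rp (h i) (\<lambda>p. g (i # p))) = label (h i)"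
    using G_child[OF assms] InfSeq by (simp add: label_rp)
  then show ?thesis unfolding InfSeq by auto
qed

lemma wt_rp:
  "G T g \<Longrightarrow> wt_gen R Aggr (rp T g) lv = wt_gen R Aggr T
     (\<lambda>p b. case g p of None \<Rightarrow> lv p b | Some T' \<Rightarrow> wt_gen R Aggr T' (\<lambda>q. lv (p @ q)))"
proof (induction T arbitrary: g lv)
  case (Leaf b)
  then show ?case using G_nil[OF Leaf] by (cases "g []") auto
next
  case (Inner b F)
  let ?LV = "\<lambda>p b. case g p of None \<Rightarrow> lv p b | Some T' \<Rightarrow> wt_gen R Aggr T' (\<lambda>q. lv (p @ q))"
  let ?F' = "seq_mapi (\<lambda>i h. h (\<lambda>p. g (i # p))) (map_seq rp F)"
  have eq: "(\<lambda>i. seq_nth (map_seq (wt_gen R Aggr) ?F') (i - 1) (\<lambda>p. lv ((i - 1) # p)))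
      = (\<lambda>i. seq_nth (map_seq (wt_gen R Aggr) F) (i - 1) (\<lambda>p. ?LV ((i - 1) # p)))"
  proof (rule ext)
    fix i
    show "seq_nth (map_seq (wt_gen R Aggr) ?F') (i - 1) (\<lambda>p. lv ((i - 1) # p))
      = seq_nth (map_seq (wt_gen R Aggr) F) (i - 1) (\<lambda>p. ?LV ((i - 1) # p))"
    proof (cases "enat (i - 1) < seq_len F")
      case True
      define j where "j = i - 1"
      have Tj: "enat j < seq_len F" using True j_def by simp
      have mem: "seq_nth F j \<in> set_seq F" using Tj set_seq_conv by fast
      have G1: "G (seq_nth F j) (\<lambda>p. g (j # p))" using G_child[OF Inner.prems Tj] .
      have "seq_nth (map_seq (wt_gen R Aggr) ?F') j (\<lambda>p. lv (j # p))
          = wt_gen R Aggr (rp (seq_nth F j) (\<lambda>p. g (j # p))) (\<lambda>p. lv (j # p))"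
        using Tj by (simp add: seq_nth_map rp_child)
      also have "\<dots> = wt_gen R Aggr (seq_nth F j) (\<lambda>p b. case g (j # p) of None \<Rightarrow> lv (j # p) b
           | Some T' \<Rightarrow> wt_gen R Aggr T' (\<lambda>q. lv (j # p @ q)))"
        using Inner.IH[OF mem G1, of "\<lambda>p. lv (j # p)"] by simp
      also have "\<dots> = seq_nth (map_seq (wt_gen R Aggr) F) j (\<lambda>p. ?LV (j # p))"
        using Tj by (simp only: seq_nth_map append_Cons)
      finally show ?thesis unfolding j_def .
    next
      case False
      define j where "j = i - 1"
      have Fj: "\<not> enat j < seq_len F" using False j_def by simp
      have none: "\<And>p. g (j # p) = None" using G_out[OF Inner.prems Fj] .
      have lv: "(\<lambda>p. ?LV (j # p)) = (\<lambda>p. lv (j # p))"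
        by (rule ext, rule ext) (simp add: none)
      show ?thesis
      proof (cases F)
        case (FinSeq xs)
        with Fj have "length xs \<le> j" by simp
        then have L: "length (map (wt_gen R Aggr) (map (\<lambda>(i, x). x (\<lambda>p. g (i # p))) (zip [0..<length xs] (map rp xs)))) \<le> j"
          "length (map (wt_gen R Aggr) xs) \<le> j" by simp_all
        show ?thesis unfolding j_def[symmetric] lv FinSeq
          by (simp only: seq.map seq_mapi.simps seq_nth.simps nth_beyond[OF L(1)] nth_beyond[OF L(2)] length_map length_zip length_upt) simp
      next
        case (InfSeq h)
        with False show ?thesis by simp
      qed
    qed
  qed
  show ?case
    by (simp only: rp.simps wt_gen.simps map_label_rp[OF Inner.prems] eq)
qed

lemma rt_rp:
  "is_rt step T \<Longrightarrow> G T g \<Longrightarrow> (\<forall>p T'. g p = Some T' \<longrightarrow> is_rt step T') \<Longrightarrow> is_rt step (rp T g)"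
proof (induction T arbitrary: g rule: is_rt.induct)
  case (1 b)
  then show ?case by (cases "g []") (auto intro: is_rt.intros)
next
  case (2 F b)
  let ?F' = "seq_mapi (\<lambda>i h. h (\<lambda>p. g (i # p))) (map_seq rp F)"
  have "\<forall>c\<in>set_seq ?F'. is_rt step c"
  proof
    fix c assume "c \<in> set_seq ?F'"
    then obtain i where i: "enat i < seq_len F" and c: "c = seq_nth ?F' i"
      unfolding set_seq_conv[of ?F'] by auto
    have c': "c = rp (seq_nth F i) (\<lambda>p. g (i # p))" using c i by (simp add: rp_child)
    have mem: "seq_nth F i \<in> set_seq F" using i set_seq_conv by fast
    show "is_rt step c" unfolding c'
      using "2.IH" mem G_child[OF "2.prems"(1) i] "2.prems"(2) by blast
  qed
  moreover have "step b (map_seq label ?F')"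
    using "2.hyps"(2) map_label_rp[OF "2.prems"(1)] by simp
  ultimately show ?case using "2.hyps"(1) by (auto intro!: is_rt.intros)
qed

lemma depth_mono: "depth_le n T \<Longrightarrow> n \<le> k \<Longrightarrow> depth_le k T"
proof (induction n T arbitrary: k rule: depth_le.induct)
  case (1 n a)
  show ?case by (rule depth_le.intros(1))
next
  case (2 F n a)
  then obtain k' where k: "k = Suc k'" and nk: "n \<le> k'" by (cases k) auto
  have "\<forall>c\<in>set_seq F. depth_le k' c" using "2.IH" nk by blast
  then show ?case unfolding k by (rule depth_le.intros(2))
qed

lemma depth_rp:
  "depth_le n T \<Longrightarrow> (\<forall>p T'. g p = Some T' \<longrightarrow> depth_le m T') \<Longrightarrow> depth_le (n + m) (rp T g)"
proof (induction n T arbitrary: g rule: depth_le.induct)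
  case (1 n b)
  show ?case
  proof (cases "g []")
    case None then show ?thesis by (simp add: depth_le.intros(1))
  next
    case (Some X)
    then have "depth_le m X" using "1" by blast
    then have "depth_le (n + m) X" by (rule depth_mono) simp
    then show ?thesis using Some by simp
  qed
next
  case (2 F n b)
  let ?F' = "seq_mapi (\<lambda>i h. h (\<lambda>p. g (i # p))) (map_seq rp F)"
  have "\<forall>c\<in>set_seq ?F'. depth_le (n + m) c"
  proof
    fix c assume "c \<in> set_seq ?F'"
    then obtain i where i: "enat i < seq_len F" and c: "c = seq_nth ?F' i"
      unfolding set_seq_conv[of ?F'] by auto
    have c': "c = rp (seq_nth F i) (\<lambda>p. g (i # p))" using c i by (simp add: rp_child)
    have mem: "seq_nth F i \<in> set_seq F" using i set_seq_conv by fast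
    have pr: "\<forall>p T'. g (i # p) = Some T' \<longrightarrow> depth_le m T'" using "2.prems" by blast
    from "2.IH" mem have "\<forall>x. (\<forall>p T'. x p = Some T' \<longrightarrow> depth_le m T') \<longrightarrow>
             depth_le (n + m) (rp (seq_nth F i) x)" by blast
    then have H: "(\<forall>p T'. g (i # p) = Some T' \<longrightarrow> depth_le m T') \<longrightarrow>
        depth_le (n + m) (rp (seq_nth F i) (\<lambda>p. g (i # p)))"
      by (erule_tac x="\<lambda>p. g (i # p)" in allE) simp
    show "depth_le (n + m) c" unfolding c' using H pr by (rule mp)
  qed
  then have "depth_le (Suc (n + m)) (Inner b ?F')" by (rule depth_le.intros(2))
  then show ?case by simp
qed

lemma lub_Lub:
  assumes "complete_lattice_semiring R" shows "is_lub R S (Lub R S)"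
proof -
  from assms obtain x where x: "is_lub R S x" unfolding complete_lattice_semiring_def by blast
  have anti: "\<And>s t. nle R s t \<Longrightarrow> nle R t s \<Longrightarrow> s = t"
    using assms unfolding complete_lattice_semiring_def by blast
  have uniq: "\<And>y. is_lub R S y \<Longrightarrow> y = x"
  proof -
    fix y assume y: "is_lub R S y"
    have xu: "\<forall>w\<in>S. nle R w x" and xl: "\<forall>z. (\<forall>w\<in>S. nle R w z) \<longrightarrow> nle R x z"
      using x unfolding is_lub_def by simp_all
    have yu: "\<forall>w\<in>S. nle R w y" and yl: "\<forall>z. (\<forall>w\<in>S. nle R w z) \<longrightarrow> nle R y z"
      using y unfolding is_lub_def by simp_all
    have "nle R y x" using yl xu by simp
    moreover have "nle R x y" using xl yu by simp
    ultimately show "y = x" by (rule anti)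
  qed
  have "Lub R S = x" unfolding Lub_def by (rule the_equality[of "is_lub R S" x, OF x uniq])
  then show ?thesis using x by simp
qed

lemma nle_trans:
  assumes "is_semiring R" "nle R x y" "nle R y z" shows "nle R x z"
proof -
  obtain u where u: "sadd R x u = y" using assms(2) unfolding nle_def by blast
  obtain v where v: "sadd R y v = z" using assms(3) unfolding nle_def by blast
  have as: "\<And>x y z. sadd R (sadd R x y) z = sadd R x (sadd R y z)"
    using assms(1) unfolding is_semiring_def by blast
  have "sadd R x (sadd R u v) = z" using as[of x u v] u v by simp
  then show ?thesis unfolding nle_def by blast
qed

lemma nle_zero:
  assumes "is_semiring R" shows "nle R (szero R) x"
proof -
  have "sadd R (szero R) x = x" using assms unfolding is_semiring_def by blast
  then show ?thesis unfolding nle_def by (rule exI)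
qed

lemma nle_step:
  assumes "is_semiring R" "nle R S w" shows "nle R (sadd R t S) (sadd R w t)"
proof -
  have as: "\<And>x y z. sadd R (sadd R x y) z = sadd R x (sadd R y z)"
    and cm: "\<And>x y. sadd R x y = sadd R y x"
    using assms(1) unfolding is_semiring_def by blast+
  obtain u where u: "sadd R S u = w" using assms(2) unfolding nle_def by blast
  have "sadd R (sadd R t S) u = sadd R w t" using as[of t S u] u cm[of t w] by simp
  then show ?thesis unfolding nle_def by (rule exI)
qed

theorem theorem41:
  fixes step :: "'a \<Rightarrow> 'a seq \<Rightarrow> bool"
    and R :: "'s sr_ops"
    and fNF :: "'a \<Rightarrow> 's"
    and Aggr :: "'a \<Rightarrow> 'a seq \<Rightarrow> 's aggr"
    and a :: 'a and T :: "'a tree" and v0 :: "nat list" and t :: 's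
  assumes "is_wARS step R fNF Aggr"
    and "is_rt step T" and "finite_depth T"
    and "label T = a"
    and "v0 \<noteq> []" and "subtree_at T v0 = Some (Leaf a)"
    and "inf_sum_const R t = Top R"
    and "\<forall>s. nle R (sadd R s t) (weight_poly step R fNF Aggr T v0 s)"
  shows "sem step R fNF Aggr a = Top R"
proof -
  have CLS: "complete_lattice_semiring R" using assms(1) unfolding is_wARS_def by blast
  then have SR: "is_semiring R" unfolding complete_lattice_semiring_def by blast
  have anti: "\<And>s t. nle R s t \<Longrightarrow> nle R t s \<Longrightarrow> s = t"
    using CLS unfolding complete_lattice_semiring_def by blast
  define gX where "gX X = (\<lambda>p. if p = v0 then Some X else None)" for X :: "'a tree"
  define Ts where "Ts n = rec_nat (Leaf a) (\<lambda>_ X. rp T (gX X)) n" for n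
  have Ts0: "Ts 0 = Leaf a" unfolding Ts_def by simp
  have TsS: "\<And>n. Ts (Suc n) = rp T (gX (Ts n))" unfolding Ts_def by simp
  have GX: "\<And>X. label X = a \<Longrightarrow> G T (gX X)"
    unfolding G_def gX_def using assms(6) by auto
  have wt: "\<And>X. label X = a \<Longrightarrow> weight step R fNF Aggr (rp T (gX X))
      = weight_poly step R fNF Aggr T v0 (weight step R fNF Aggr X)"
  proof -
    fix X :: "'a tree" assume X: "label X = a"
    show "weight step R fNF Aggr (rp T (gX X))
      = weight_poly step R fNF Aggr T v0 (weight step R fNF Aggr X)"
      unfolding weight_def weight_poly_def wt_rp[OF GX[OF X]]
      by (rule arg_cong[where f="wt_gen R Aggr T"], rule ext, rule ext) (simp add: gX_def)
  qed
  obtain dT where dT: "depth_le dT T" using assms(3) unfolding finite_depth_def by blast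
  have main: "is_rt step (Ts n) \<and> finite_depth (Ts n) \<and> label (Ts n) = a \<and>
     nle R (foldr (sadd R) (replicate n t) (szero R)) (weight step R fNF Aggr (Ts n))" for n
  proof (induction n)
    case 0
    show ?case unfolding Ts0 finite_depth_def
      by (auto intro: is_rt.intros depth_le.intros nle_zero[OF SR])
  next
    case (Suc n)
    let ?X = "Ts n"
    have lX: "label ?X = a" using Suc by blast
    obtain dX where dX: "depth_le dX ?X" using Suc unfolding finite_depth_def by blast
    have rt: "is_rt step (Ts (Suc n))" unfolding TsS
      by (rule rt_rp[OF assms(2) GX[OF lX]]) (use Suc in \<open>simp add: gX_def\<close>)
    have "depth_le (dT + dX) (rp T (gX ?X))"
      by (rule depth_rp[OF dT]) (use dX in \<open>simp add: gX_def\<close>)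
    then have fd: "finite_depth (Ts (Suc n))" unfolding TsS finite_depth_def by blast
    have lb: "label (Ts (Suc n)) = a" unfolding TsS using label_rp[OF GX[OF lX]] assms(4) by simp
    have "nle R (sadd R t (foldr (sadd R) (replicate n t) (szero R)))
                (sadd R (weight step R fNF Aggr ?X) t)"
      using nle_step[OF SR] Suc by blast
    moreover have "nle R (sadd R (weight step R fNF Aggr ?X) t) (weight step R fNF Aggr (Ts (Suc n)))"
      unfolding TsS wt[OF lX] using assms(8) by blast
    ultimately have "nle R (foldr (sadd R) (replicate (Suc n) t) (szero R)) (weight step R fNF Aggr (Ts (Suc n)))"
      using nle_trans[OF SR] by simp
    then show ?case using rt fd lb by blast
  qed
  define W where "W = {weight step R fNF Aggr T | T. is_rt step T \<and> finite_depth T \<and> label T = a}"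
  define P where "P = {foldr (sadd R) (map (\<lambda>_. t) [0..<n]) (szero R) | n. n \<ge> 1}"
  have semW: "sem step R fNF Aggr a = Lub R W" unfolding sem_def W_def by simp
  have topP: "Top R = Lub R P" using assms(7) unfolding inf_sum_const_def P_def by simp
  have lW: "is_lub R W (Lub R W)" by (rule lub_Lub[OF CLS])
  have lP: "is_lub R P (Lub R P)" by (rule lub_Lub[OF CLS])
  have ub: "\<forall>y\<in>P. nle R y (Lub R W)"
  proof
    fix y assume "y \<in> P"
    then obtain n where y: "y = foldr (sadd R) (replicate n t) (szero R)"
      unfolding P_def by (auto simp: map_replicate_const)
    have "weight step R fNF Aggr (Ts n) \<in> W" unfolding W_def using main[of n] by blast
    then have "nle R (weight step R fNF Aggr (Ts n)) (Lub R W)" using lW unfolding is_lub_def by blast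
    then show "nle R y (Lub R W)" using main[of n] nle_trans[OF SR] y by blast
  qed
  have 1: "nle R (Top R) (sem step R fNF Aggr a)"
    unfolding topP semW using lP ub unfolding is_lub_def by blast
  have "is_lub R UNIV (Top R)" unfolding Top_def by (rule lub_Lub[OF CLS])
  then have 2: "nle R (sem step R fNF Aggr a) (Top R)" unfolding is_lub_def by blast
  show ?thesis using anti[OF 2 1] .
qed

end
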